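(* (1) For every $\phi\in\mathcal{L}_{\Box\!\!\rightarrow}$, if $\phi\in\mathsf{N4CK}$, then $\phi\in\mathsf{CK}$. (2) The classical system $\mathbb{CK}$ (axiomatizing $\mathsf{CK}$) and the system $\mathbb{N}4\mathbb{CK}$ extended with the axiom schemes $\phi\to(\sim\phi\to\psi)$ and $\phi\vee\sim\phi$ generate the same logic over $\mathcal{L}_{\Box\!\!\rightarrow}$ when both are closed under the operation $^\iota$.
   Context: $\mathcal{L}_{\Box\!\!\rightarrow}$ is built from propositional variables with $\wedge,\vee,\to$, negation $\sim$, and a binary would-conditional $\Box\!\!\rightarrow$; $\phi\Diamond\!\!\rightarrow\psi$ abbreviates $\sim(\phi\Box\!\!\rightarrow\sim\psi)$. Abbreviations: $\leftrightarrow$ is mutual $\to$; $\phi\Rightarrow\psi:=(\phi\to\psi)\wedge(\sim\psi\to\sim\phi)$; $\phi\Leftrightarrow\psi:=(\phi\Rightarrow\psi)\wedge(\psi\Rightarrow\phi)$. Consider the axioms (A1) $((\phi\Box\!\!\rightarrow\psi)\wedge(\phi\Box\!\!\rightarrow\chi))\Leftrightarrow(\phi\Box\!\!\rightarrow(\psi\wedge\chi))$; (A2) $(\sim(\phi\Box\!\!\rightarrow\psi)\wedge(\phi\Box\!\!\rightarrow\chi))\to\sim(\phi\Box\!\!\rightarrow(\psi\vee\sim\chi))$; (A3) $((\phi\Diamond\!\!\rightarrow\psi)\to(\phi\Box\!\!\rightarrow\chi))\to(\phi\Box\!\!\rightarrow(\psi\to\chi))$; (A4) $\phi\Box\!\!\rightarrow(\psi\to\psi)$;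 and rules (RA) from $\phi\Leftrightarrow\psi$ infer $(\phi\Box\!\!\rightarrow\chi)\Leftrightarrow(\psi\Box\!\!\rightarrow\chi)$; (RC1) from $\phi\leftrightarrow\psi$ infer $(\chi\Box\!\!\rightarrow\phi)\leftrightarrow(\chi\Box\!\!\rightarrow\psi)$; (RC2) from $\sim\phi\leftrightarrow\sim\psi$ infer $\sim(\chi\Box\!\!\rightarrow\phi)\leftrightarrow\sim(\chi\Box\!\!\rightarrow\psi)$. $\mathbb{N}4\mathbb{CK}$ = modus ponens + positive intuitionistic schemes + $\sim\sim\phi\leftrightarrow\phi$, $\sim(\phi\wedge\psi)\leftrightarrow(\sim\phi\vee\sim\psi)$, $\sim(\phi\vee\psi)\leftrightarrow(\sim\phi\wedge\sim\psi)$, $\sim(\phi\to\psi)\leftrightarrow(\phi\wedge\sim\psi)$ + (A1)–(A4) + (RA),(RC1),(RC2); it is sound and complete for $\mathsf{N4CK}$, the paraconsistent Nelsonian conditional logic. $\mathsf{CK}$ is Chellas' basic classical conditional logic, axiomatized by $\mathbb{CK}$ := classical propositional logic (with $\sim$ as classical negation) + (A1), (A4), (RA), (RC1). For a system $\mathbb{S}$, $\Gamma\vdash_\mathbb{S}\Delta$ means some nonempty finite disjunction of members of $\Delta$ is derivable from $\Gamma$ and theorems by modus ponens, and $\mathbb{S}^\iota[\mathcal{L}_{\Box\!\!\rightarrow}]$ is the resulting relation extended by all pairs $(\Gamma,\emptyset)$ such that $\Gamma\vdash_\mathbb{S}p_1\wedge\sim p_1$. *)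

theory Defs
  imports Main
begin

datatype fm =
    Var nat
  | Conj fm fm
  | Disj fm fm
  | Imp fm fm
  | Neg fm          (* strong negation ~ *)
  | Cond fm fm

definition Iff :: "fm \<Rightarrow> fm \<Rightarrow> fm" where
  "Iff a b = Conj (Imp a b) (Imp b a)"

definition SImp :: "fm \<Rightarrow> fm \<Rightarrow> fm" where
  "SImp a b = Conj (Imp a b) (Imp (Neg b) (Neg a))"

definition SIff :: "fm \<Rightarrow> fm \<Rightarrow> fm" where
  "SIff a b = Conj (SImp a b) (SImp b a)"

definition Might :: "fm \<Rightarrow> fm \<Rightarrow> fm" where
  "Might a b = Neg (Cond a (Neg b))"

inductive pos_ax :: "fm \<Rightarrow> bool" where
  K:  "pos_ax (Imp a (Imp b a))"
| S:  "pos_ax (Imp (Imp a (Imp b c)) (Imp (Imp a b) (Imp a c)))"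
| C1: "pos_ax (Imp (Conj a b) a)"
| C2: "pos_ax (Imp (Conj a b) b)"
| CI: "pos_ax (Imp a (Imp b (Conj a b)))"
| D1: "pos_ax (Imp a (Disj a b))"
| D2: "pos_ax (Imp b (Disj a b))"
| DE: "pos_ax (Imp (Imp a c) (Imp (Imp b c) (Imp (Disj a b) c)))"

inductive neg_ax :: "fm \<Rightarrow> bool" where
  "neg_ax (Iff (Neg (Neg a)) a)"
| "neg_ax (Iff (Neg (Conj a b)) (Disj (Neg a) (Neg b)))"
| "neg_ax (Iff (Neg (Disj a b)) (Conj (Neg a) (Neg b)))"
| "neg_ax (Iff (Neg (Imp a b)) (Conj a (Neg b)))"

definition A1 :: "fm \<Rightarrow> bool" where
  "A1 f \<longleftrightarrow> (\<exists>a b c. f = SIff (Conj (Cond a b) (Cond a c)) (Cond a (Conj b c)))"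

definition A2 :: "fm \<Rightarrow> bool" where
  "A2 f \<longleftrightarrow> (\<exists>a b c. f = Imp (Conj (Neg (Cond a b)) (Cond a c))
                                   (Neg (Cond a (Disj b (Neg c)))))"

definition A3 :: "fm \<Rightarrow> bool" where
  "A3 f \<longleftrightarrow> (\<exists>a b c. f = Imp (Imp (Might a b) (Cond a c)) (Cond a (Imp b c)))"

definition A4 :: "fm \<Rightarrow> bool" where
  "A4 f \<longleftrightarrow> (\<exists>a b. f = Cond a (Imp b b))"

inductive n4ck :: "fm set \<Rightarrow> fm \<Rightarrow> bool" for E :: "fm set" where
  ax_pos: "pos_ax f \<Longrightarrow> n4ck E f"
| ax_neg: "neg_ax f \<Longrightarrow> n4ck E f"
| ax_A1: "A1 f \<Longrightarrow> n4ck E f"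
| ax_A2: "A2 f \<Longrightarrow> n4ck E f"
| ax_A3: "A3 f \<Longrightarrow> n4ck E f"
| ax_A4: "A4 f \<Longrightarrow> n4ck E f"
| ax_extra: "f \<in> E \<Longrightarrow> n4ck E f"
| MP: "n4ck E (Imp a b) \<Longrightarrow> n4ck E a \<Longrightarrow> n4ck E b"
| RA: "n4ck E (SIff a b) \<Longrightarrow> n4ck E (SIff (Cond a c) (Cond b c))"
| RC1: "n4ck E (Iff a b) \<Longrightarrow> n4ck E (Iff (Cond c a) (Cond c b))"
| RC2: "n4ck E (Iff (Neg a) (Neg b)) \<Longrightarrow> n4ck E (Iff (Neg (Cond c a)) (Neg (Cond c b)))"

abbreviation N4CK :: "fm \<Rightarrow> bool" where "N4CK \<equiv> n4ck {}"

definition classical_schemes :: "fm set" where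
  "classical_schemes = {Imp a (Imp (Neg a) b) | a b. True} \<union> {Disj a (Neg a) | a. True}"

abbreviation N4CK_cl :: "fm \<Rightarrow> bool" where "N4CK_cl \<equiv> n4ck classical_schemes"

fun ceval :: "(fm \<Rightarrow> bool) \<Rightarrow> fm \<Rightarrow> bool" where
  "ceval v (Var p) = v (Var p)"
| "ceval v (Cond a b) = v (Cond a b)"
| "ceval v (Conj a b) = (ceval v a \<and> ceval v b)"
| "ceval v (Disj a b) = (ceval v a \<or> ceval v b)"
| "ceval v (Imp a b) = (ceval v a \<longrightarrow> ceval v b)"
| "ceval v (Neg a) = (\<not> ceval v a)"

definition taut :: "fm \<Rightarrow> bool" where
  "taut f \<longleftrightarrow> (\<forall>v. ceval v f)"

inductive ck :: "fm \<Rightarrow> bool" where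
  ax_taut: "taut f \<Longrightarrow> ck f"
| ax_A1: "A1 f \<Longrightarrow> ck f"
| ax_A4: "A4 f \<Longrightarrow> ck f"
| MP: "ck (Imp a b) \<Longrightarrow> ck a \<Longrightarrow> ck b"
| RA: "ck (SIff a b) \<Longrightarrow> ck (SIff (Cond a c) (Cond b c))"
| RC1: "ck (Iff a b) \<Longrightarrow> ck (Iff (Cond c a) (Cond c b))"

inductive derives :: "(fm \<Rightarrow> bool) \<Rightarrow> fm set \<Rightarrow> fm \<Rightarrow> bool" for S :: "fm \<Rightarrow> bool" and \<Gamma> :: "fm set" where
  prem: "f \<in> \<Gamma> \<Longrightarrow> derives S \<Gamma> f"
| theorem_rule: "S f \<Longrightarrow> derives S \<Gamma> f"
| mp: "derives S \<Gamma> (Imp a b) \<Longrightarrow> derives S \<Gamma> a \<Longrightarrow> derives S \<Gamma> b"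

fun bigdisj :: "fm list \<Rightarrow> fm" where
  "bigdisj [] = Conj (Var 1) (Neg (Var 1))"   (* never used: lists are required nonempty *)
| "bigdisj [f] = f"
| "bigdisj (f # fs) = Disj f (bigdisj fs)"

definition cons_rel :: "(fm \<Rightarrow> bool) \<Rightarrow> fm set \<Rightarrow> fm set \<Rightarrow> bool" where
  "cons_rel S \<Gamma> \<Delta> \<longleftrightarrow> (\<exists>fs. fs \<noteq> [] \<and> set fs \<subseteq> \<Delta> \<and> derives S \<Gamma> (bigdisj fs))"

definition iota :: "(fm \<Rightarrow> bool) \<Rightarrow> (fm set \<times> fm set) set" where
  "iota S = {(\<Gamma>, \<Delta>). cons_rel S \<Gamma> \<Delta>}
          \<union> {(\<Gamma>, {}) | \<Gamma>. derives S \<Gamma> (Conj (Var 1) (Neg (Var 1)))}"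

end

theory Submission
  imports Defs
begin

lemma ck_taut1: "ck a \<Longrightarrow> taut (Imp a b) \<Longrightarrow> ck b"
  using ck.MP ck.ax_taut by blast

lemma ck_conj: "ck a \<Longrightarrow> ck b \<Longrightarrow> ck (Conj a b)"
proof -
  assume "ck a" "ck b"
  have "taut (Imp a (Imp b (Conj a b)))" by (simp add: taut_def)
  then show ?thesis using \<open>ck a\<close> \<open>ck b\<close> by (meson ck.MP ck.ax_taut)
qed

lemma ck_taut2: "ck a \<Longrightarrow> ck b \<Longrightarrow> taut (Imp (Conj a b) c) \<Longrightarrow> ck c"
  using ck_conj ck_taut1 by blast

lemma ck_A1: "ck (SIff (Conj (Cond a b) (Cond a c)) (Cond a (Conj b c)))"
  by (rule ck.ax_A1) (unfold A1_def, blast)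

lemma ck_mono:
  assumes "taut (Imp x y)"
  shows "ck (Imp (Cond a x) (Cond a y))"
proof -
  have "taut (Iff x (Conj x y))" using assms unfolding taut_def Iff_def by auto
  then have 1: "ck (Iff (Cond a x) (Cond a (Conj x y)))" by (intro ck.RC1 ck.ax_taut)
  show ?thesis
    by (rule ck_taut2[OF 1 ck_A1[of a x y]]) (unfold taut_def Iff_def SIff_def SImp_def ceval.simps, blast)
qed

lemma n4ck_ck:
  assumes "n4ck E f" "\<forall>g\<in>E. taut g"
  shows "ck f"
  using assms(1)
proof (induction rule: n4ck.induct)
  case (ax_pos f)
  then show ?case by (cases rule: pos_ax.cases) (auto intro!: ck.ax_taut simp: taut_def)
next
  case (ax_neg f)
  then show ?case by (cases rule: neg_ax.cases) (auto intro!: ck.ax_taut simp: taut_def Iff_def)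
next
  case (ax_A1 f)
  then show ?case by (rule ck.ax_A1)
next
  case (ax_A2 f)
  then obtain a b c where f: "f = Imp (Conj (Neg (Cond a b)) (Cond a c))
                                   (Neg (Cond a (Disj b (Neg c))))" by (auto simp: A2_def)
  have 1: "ck (Iff (Cond a (Conj c (Disj b (Neg c)))) (Cond a (Conj b c)))"
    by (intro ck.RC1 ck.ax_taut) (unfold taut_def Iff_def ceval.simps, blast)
  have 2: "ck (Conj (SIff (Conj (Cond a c) (Cond a (Disj b (Neg c)))) (Cond a (Conj c (Disj b (Neg c)))))
     (SIff (Conj (Cond a b) (Cond a c)) (Cond a (Conj b c))))"
    by (intro ck_conj ck_A1)
  show ?case unfolding f
    by (rule ck_taut2[OF 1 2]) (unfold taut_def Iff_def SIff_def SImp_def ceval.simps, blast)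
next
  case (ax_A3 f)
  then obtain a b c where f: "f = Imp (Imp (Might a b) (Cond a c)) (Cond a (Imp b c))"
    by (auto simp: A3_def)
  have 1: "ck (Imp (Cond a (Neg b)) (Cond a (Imp b c)))" by (rule ck_mono) (unfold taut_def ceval.simps, blast)
  have 2: "ck (Imp (Cond a c) (Cond a (Imp b c)))" by (rule ck_mono) (unfold taut_def ceval.simps, blast)
  show ?case unfolding f
    by (rule ck_taut2[OF 1 2]) (unfold taut_def Might_def ceval.simps, blast)
next
  case (ax_A4 f)
  then show ?case by (rule ck.ax_A4)
next
  case (ax_extra f)
  then show ?case using assms(2) by (auto intro: ck.ax_taut)
next
  case (MP a b)
  then show ?case by (blast intro: ck.MP)
next
  case (RA a b c)
  then show ?case by (blast intro: ck.RA)
next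
  case (RC1 a b c)
  then show ?case by (blast intro: ck.RC1)
next
  case (RC2 a b c)
  have "ck (Iff a b)" by (rule ck_taut1[OF RC2.IH]) (unfold taut_def Iff_def ceval.simps, blast)
  then have "ck (Iff (Cond c a) (Cond c b))" by (rule ck.RC1)
  then show ?case by (rule ck_taut1) (unfold taut_def Iff_def ceval.simps, blast)
qed

section \<open>Classical completeness of N4CK with classical schemes\<close>

abbreviation D :: "fm set \<Rightarrow> fm \<Rightarrow> bool" where "D \<equiv> derives N4CK_cl"

lemma D_ax: "N4CK_cl f \<Longrightarrow> D H f"
  by (rule derives.theorem_rule)

lemma D_pos: "pos_ax f \<Longrightarrow> D H f"
  by (intro D_ax n4ck.ax_pos)

lemma D_mp: "D H (Imp a b) \<Longrightarrow> D H a \<Longrightarrow> D H b"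
  by (rule derives.mp)

lemma D_mono: "D H f \<Longrightarrow> H \<subseteq> H' \<Longrightarrow> D H' f"
  by (induction rule: derives.induct) (auto intro: derives.intros)

lemma D_id: "D H (Imp a a)"
proof -
  have 1: "D H (Imp (Imp a (Imp (Imp a a) a)) (Imp (Imp a (Imp a a)) (Imp a a)))"
    by (intro D_pos pos_ax.S)
  have 2: "D H (Imp a (Imp (Imp a a) a))" by (intro D_pos pos_ax.K)
  have 3: "D H (Imp a (Imp a a))" by (intro D_pos pos_ax.K)
  show ?thesis using D_mp[OF D_mp[OF 1 2] 3] .
qed

lemma deduction: "D (insert a H) b \<Longrightarrow> D H (Imp a b)"
proof (induction rule: derives.induct)
  case (prem f)
  then show ?case
  proof
    assume "f = a" then show ?thesis using D_id by simp
  next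
    assume "f \<in> H"
    then show ?thesis by (meson D_mp D_pos pos_ax.K derives.prem)
  qed
next
  case (theorem_rule f)
  then show ?case by (meson D_mp D_pos pos_ax.K derives.theorem_rule)
next
  case (mp x y)
  have "D H (Imp (Imp a (Imp x y)) (Imp (Imp a x) (Imp a y)))" by (intro D_pos pos_ax.S)
  then show ?case using mp.IH D_mp by blast
qed

lemma D_conjE1: "D H (Conj a b) \<Longrightarrow> D H a"
  by (meson D_mp D_pos pos_ax.C1)

lemma D_conjE2: "D H (Conj a b) \<Longrightarrow> D H b"
  by (meson D_mp D_pos pos_ax.C2)

lemma D_conjI: "D H a \<Longrightarrow> D H b \<Longrightarrow> D H (Conj a b)"
  by (meson D_mp D_pos pos_ax.CI)

lemma D_disjI1: "D H a \<Longrightarrow> D H (Disj a b)"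
  by (meson D_mp D_pos pos_ax.D1)

lemma D_disjI2: "D H b \<Longrightarrow> D H (Disj a b)"
  by (meson D_mp D_pos pos_ax.D2)

lemma D_negax: "neg_ax (Iff x y) \<Longrightarrow> D H x \<Longrightarrow> D H y"
  "neg_ax (Iff x y) \<Longrightarrow> D H y \<Longrightarrow> D H x"
proof -
  assume n: "neg_ax (Iff x y)"
  have "D H (Iff x y)" by (intro D_ax n4ck.ax_neg n)
  then have "D H (Imp x y)" "D H (Imp y x)" unfolding Iff_def
    by (auto dest: D_conjE1 D_conjE2)
  then show "D H x \<Longrightarrow> D H y" "D H y \<Longrightarrow> D H x" by (auto intro: D_mp)
qed

lemma D_expl: "D H a \<Longrightarrow> D H (Neg a) \<Longrightarrow> D H b"
proof -
  assume "D H a" "D H (Neg a)"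
  have "D H (Imp a (Imp (Neg a) b))"
    by (intro D_ax n4ck.ax_extra) (auto simp: classical_schemes_def)
  then show ?thesis using \<open>D H a\<close> \<open>D H (Neg a)\<close> D_mp by blast
qed

lemma D_lem: "D H (Disj a (Neg a))"
  by (intro D_ax n4ck.ax_extra) (auto simp: classical_schemes_def)

fun atoms :: "fm \<Rightarrow> fm set" where
  "atoms (Var p) = {Var p}"
| "atoms (Cond a b) = {Cond a b}"
| "atoms (Conj a b) = atoms a \<union> atoms b"
| "atoms (Disj a b) = atoms a \<union> atoms b"
| "atoms (Imp a b) = atoms a \<union> atoms b"
| "atoms (Neg a) = atoms a"

lemma finite_atoms: "finite (atoms f)"
  by (induction f) auto

definition lit :: "(fm \<Rightarrow> bool) \<Rightarrow> fm \<Rightarrow> fm" where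
  "lit v q = (if v q then q else Neg q)"

lemma kalmar:
  "lit v ` atoms f \<subseteq> H \<Longrightarrow> (ceval v f \<longrightarrow> D H f) \<and> (\<not> ceval v f \<longrightarrow> D H (Neg f))"
proof (induction f)
  case (Var p)
  then show ?case by (auto simp: lit_def intro: derives.prem split: if_splits)
next
  case (Cond a b)
  then show ?case by (auto simp: lit_def intro: derives.prem split: if_splits)
next
  case (Conj a b)
  have na: "neg_ax (Iff (Neg (Conj a b)) (Disj (Neg a) (Neg b)))" by (rule neg_ax.intros)
  have IHa: "(ceval v a \<longrightarrow> D H a) \<and> (\<not> ceval v a \<longrightarrow> D H (Neg a))" using Conj by auto
  have IHb: "(ceval v b \<longrightarrow> D H b) \<and> (\<not> ceval v b \<longrightarrow> D H (Neg b))" using Conj by auto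
  show ?case using IHa IHb D_negax(2)[OF na] by (auto intro: D_conjI D_disjI1 D_disjI2)
next
  case (Disj a b)
  have na: "neg_ax (Iff (Neg (Disj a b)) (Conj (Neg a) (Neg b)))" by (rule neg_ax.intros)
  have IHa: "(ceval v a \<longrightarrow> D H a) \<and> (\<not> ceval v a \<longrightarrow> D H (Neg a))" using Disj by auto
  have IHb: "(ceval v b \<longrightarrow> D H b) \<and> (\<not> ceval v b \<longrightarrow> D H (Neg b))" using Disj by auto
  show ?case using IHa IHb D_negax(2)[OF na] by (auto intro: D_conjI D_disjI1 D_disjI2)
next
  case (Imp a b)
  have na: "neg_ax (Iff (Neg (Imp a b)) (Conj a (Neg b)))" by (rule neg_ax.intros)
  have IHa: "(ceval v a \<longrightarrow> D H a) \<and> (\<not> ceval v a \<longrightarrow> D H (Neg a))" using Imp by auto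
  have IHb: "(ceval v b \<longrightarrow> D H b) \<and> (\<not> ceval v b \<longrightarrow> D H (Neg b))" using Imp by auto
  have c1: "D H (Imp a b)" if "\<not> ceval v a"
  proof -
    have "D (insert a H) (Neg a)" using IHa that D_mono by blast
    moreover have "D (insert a H) a" by (rule derives.prem) simp
    ultimately have "D (insert a H) b" using D_expl by blast
    then show ?thesis by (rule deduction)
  qed
  have c2: "D H (Imp a b)" if "ceval v b"
    using IHb that by (meson D_mp D_pos pos_ax.K)
  show ?case using c1 c2 IHa IHb D_negax(2)[OF na] by (auto intro: D_conjI)
next
  case (Neg a)
  have na: "neg_ax (Iff (Neg (Neg a)) a)" by (rule neg_ax.intros)
  have IHa: "(ceval v a \<longrightarrow> D H a) \<and> (\<not> ceval v a \<longrightarrow> D H (Neg a))" using Neg by auto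
  show ?case using IHa D_negax(2)[OF na] by auto
qed

lemma D_cases: "D (insert p H) f \<Longrightarrow> D (insert (Neg p) H) f \<Longrightarrow> D H f"
proof -
  assume "D (insert p H) f" "D (insert (Neg p) H) f"
  then have 1: "D H (Imp p f)" and 2: "D H (Imp (Neg p) f)" by (auto intro: deduction)
  have "D H (Imp (Imp p f) (Imp (Imp (Neg p) f) (Imp (Disj p (Neg p)) f)))"
    by (intro D_pos pos_ax.DE)
  then show ?thesis using 1 2 D_lem D_mp by blast
qed

lemma elim:
  "(\<forall>v. D (lit v ` (set ps \<union> X)) f) \<Longrightarrow> (\<forall>v. D (lit v ` X) f)"
proof (induction ps arbitrary: X)
  case Nil
  then show ?case by simp
next
  case (Cons p ps)
  have "\<forall>v. D (lit v ` (set ps \<union> insert p X)) f" using Cons.prems by (simp add: insert_commute)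
  then have h: "\<forall>v. D (lit v ` (insert p X)) f" by (rule Cons.IH)
  show ?case
  proof
    fix v
    show "D (lit v ` X) f"
    proof (cases "p \<in> X")
      case True
      then show ?thesis using h by (simp add: insert_absorb)
    next
      case False
      have e1: "lit (v(p := True)) ` X = lit v ` X" and e2: "lit (v(p := False)) ` X = lit v ` X"
        using False by (auto simp: lit_def image_def)
      have "D (insert p (lit v ` X)) f"
        using h[rule_format, of "v(p := True)"] e1 by (simp add: lit_def)
      moreover have "D (insert (Neg p) (lit v ` X)) f"
        using h[rule_format, of "v(p := False)"] e2 by (simp add: lit_def)
      ultimately show ?thesis by (rule D_cases)
    qed
  qed
qed

lemma D_empty: "D {} f \<Longrightarrow> N4CK_cl f"
  by (induction rule: derives.induct) (auto intro: n4ck.MP)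

lemma taut_complete: "taut f \<Longrightarrow> N4CK_cl f"
proof -
  assume t: "taut f"
  obtain ps where ps: "set ps = atoms f" using finite_atoms finite_list by blast
  have "\<forall>v. D (lit v ` (set ps \<union> {})) f"
    using kalmar[of v f for v] t ps by (auto simp: taut_def)
  then have "D (lit v ` {}) f" for v using elim by blast
  then show ?thesis by (auto intro: D_empty)
qed

lemma ck_n4 : "ck f \<Longrightarrow> N4CK_cl f"
proof (induction rule: ck.induct)
  case (ax_taut f)
  then show ?case by (rule taut_complete)
qed (auto intro: n4ck.intros)

lemma ck_eq: "ck = N4CK_cl"
proof (intro ext iffI)
  fix f assume "N4CK_cl f"
  then show "ck f" by (rule n4ck_ck) (auto simp: classical_schemes_def taut_def)
qed (rule ck_n4)

theorem proposition8:
  shows "(\<forall>f. N4CK f \<longrightarrow> ck f) \<and> iota ck = iota N4CK_cl"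
  using n4ck_ck[of "{}"] ck_eq by auto

end
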